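(* Assume (A1). Let $g:\mathcal X\to\mathbb R$ with $0<\|\nabla g\|_\infty\le\|g\|_\infty$, and let $u$ be the solution of problem (P) with boundary data $g|_\Gamma$. Then for any two neighbors $x,y$ in the graph (i.e. $w_{xy}>0$), $$|u(x)-u(y)|\le\left(\frac{4\log\big(\|g\|_\infty\|\nabla g\|_\infty^{-1}\big)}{1-\alpha+2\alpha\delta}+5\right)\|\nabla g\|_\infty.$$
   Context: $\mathcal X$ is a finite vertex set and $W=(w_{xy})$ a symmetric matrix of nonnegative weights defining a connected graph, with degrees $d_x=\sum_{y}w_{xy}$ and neighbor sets $N_x=\{y\in\mathcal X:w_{xy}>0\}$. For $p\ge2$, $\alpha=1/(p-1)$, and $$\mathcal L_p u(x)=\alpha\,\frac{1}{d_x}\sum_{y}w_{xy}\big(u(x)-u(y)\big)+(1-\alpha)\Big(u(x)-\tfrac12\big(\max_{N_x}u+\min_{N_x}u\big)\Big).$$ $\Gamma\subset\mathcal X$ is the set of labeled vertices. Problem (P): find $u:\mathcal X\to\mathbb R$ with $\mathcal L_pu(x)=0$ for $x\in\mathcal X\setminus\Gamma$ and $u=g$ on $\Gamma$; it has a unique solution. Assumption (A1): $\Gamma\cap N_x\neq\varnothing$ for every $x\in\mathcal X$. Notation: $\|g\|_\infty=\max_{x\in\mathcal X}|g(x)|$, $\|\nabla g\|_\infty=\max_{x,y\in\mathcal X}|g(x)-g(y)|\mathbb 1_{w_{xy}>0}$, and $$\delta=\min_{x\in\mathcal X}\frac{\sum_{y\in\mathcal X}w_{xy}\mathbb 1_{y\in\Gamma}}{\sum_{z\in\mathcal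 X}w_{xz}}.$$ *)

theory Defs
  imports Complex_Main
begin

text \<open>Vertices form a finite type 'a (the set X is UNIV). Weights w :: 'a => 'a => real.\<close>

definition deg :: "('a::finite \<Rightarrow> 'a \<Rightarrow> real) \<Rightarrow> 'a \<Rightarrow> real" where
  "deg w x = (\<Sum>y\<in>UNIV. w x y)"

definition nbrs :: "('a::finite \<Rightarrow> 'a \<Rightarrow> real) \<Rightarrow> 'a \<Rightarrow> 'a set" where
  "nbrs w x = {y. w x y > 0}"

definition graph_connected :: "('a::finite \<Rightarrow> 'a \<Rightarrow> real) \<Rightarrow> bool" where
  "graph_connected w \<longleftrightarrow> (\<forall>x y. (\<lambda>a b. 0 < w a b)\<^sup>*\<^sup>* x y)"

definition alpha_p :: "real \<Rightarrow> real" where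
  "alpha_p p = 1 / (p - 1)"

definition Lp :: "real \<Rightarrow> ('a::finite \<Rightarrow> 'a \<Rightarrow> real) \<Rightarrow> ('a \<Rightarrow> real) \<Rightarrow> 'a \<Rightarrow> real" where
  "Lp p w u x =
     alpha_p p * (1 / deg w x) * (\<Sum>y\<in>UNIV. w x y * (u x - u y))
     + (1 - alpha_p p) * (u x - (Max (u ` nbrs w x) + Min (u ` nbrs w x)) / 2)"

definition sup_norm :: "('a::finite \<Rightarrow> real) \<Rightarrow> real" where
  "sup_norm g = Max (range (\<lambda>x. \<bar>g x\<bar>))"

definition grad_norm :: "('a::finite \<Rightarrow> 'a \<Rightarrow> real) \<Rightarrow> ('a \<Rightarrow> real) \<Rightarrow> real" where
  "grad_norm w g = Max (range (\<lambda>(x, y). \<bar>g x - g y\<bar> * (if w x y > 0 then 1 else 0)))"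

definition delta :: "('a::finite \<Rightarrow> 'a \<Rightarrow> real) \<Rightarrow> 'a set \<Rightarrow> real" where
  "delta w \<Gamma> = Min (range (\<lambda>x. (\<Sum>y\<in>UNIV. w x y * (if y \<in> \<Gamma> then 1 else 0)) / (\<Sum>z\<in>UNIV. w x z)))"

definition assumption_A1 :: "('a::finite \<Rightarrow> 'a \<Rightarrow> real) \<Rightarrow> 'a set \<Rightarrow> bool" where
  "assumption_A1 w \<Gamma> \<longleftrightarrow> (\<forall>x. \<Gamma> \<inter> nbrs w x \<noteq> {})"

definition solves_P :: "real \<Rightarrow> ('a::finite \<Rightarrow> 'a \<Rightarrow> real) \<Rightarrow> 'a set \<Rightarrow> ('a \<Rightarrow> real) \<Rightarrow> ('a \<Rightarrow> real) \<Rightarrow> bool" where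
  "solves_P p w \<Gamma> g u \<longleftrightarrow> (\<forall>x. x \<notin> \<Gamma> \<longrightarrow> Lp p w u x = 0) \<and> (\<forall>x\<in>\<Gamma>. u x = g x)"

end

theory Submission
  imports Defs
begin


lemma sup_norm_ge: "\<bar>g x\<bar> \<le> sup_norm (g::'a::finite \<Rightarrow> real)"
  unfolding sup_norm_def by (rule Max_ge) auto

lemma grad_ge:
  fixes w :: "'a::finite \<Rightarrow> 'a \<Rightarrow> real"
  assumes "w x y > 0" shows "\<bar>g x - g y\<bar> \<le> grad_norm w g"
proof -
  have "(\<lambda>(x, y). \<bar>g x - g y\<bar> * (if w x y > 0 then 1 else 0)) (x,y)
        \<le> Max (range (\<lambda>(x, y). \<bar>g x - g y\<bar> * (if w x y > 0 then 1 else (0::real))))"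
    by (rule Max_ge[OF _ rangeI]) simp
  thus ?thesis using assms by (simp add: grad_norm_def)
qed

lemma delta_le:
  fixes w :: "'a::finite \<Rightarrow> 'a \<Rightarrow> real"
  shows "delta w \<Gamma> \<le> (\<Sum>y\<in>UNIV. w x y * (if y \<in> \<Gamma> then 1 else 0)) / (\<Sum>z\<in>UNIV. w x z)"
  unfolding delta_def by (rule Min_le) auto

lemma delta_pos:
  fixes w :: "'a::finite \<Rightarrow> 'a \<Rightarrow> real"
  assumes nonneg: "\<And>x y. w x y \<ge> 0" and A1: "assumption_A1 w \<Gamma>"
  shows "0 < delta w \<Gamma>"
proof -
  have "delta w \<Gamma> \<in> range (\<lambda>x. (\<Sum>y\<in>UNIV. w x y * (if y \<in> \<Gamma> then 1 else 0)) / (\<Sum>z\<in>UNIV. w x z))"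
    unfolding delta_def by (rule Min_in) auto
  then obtain x where x: "delta w \<Gamma> = (\<Sum>y\<in>UNIV. w x y * (if y \<in> \<Gamma> then 1 else 0)) / (\<Sum>z\<in>UNIV. w x z)"
    by auto
  from A1 obtain z where z: "z \<in> \<Gamma>" "w x z > 0"
    unfolding assumption_A1_def nbrs_def by blast
  have "w x z * (if z \<in> \<Gamma> then 1 else 0) \<le> (\<Sum>y\<in>UNIV. w x y * (if y \<in> \<Gamma> then 1 else 0))"
    by (rule member_le_sum) (auto simp: nonneg)
  hence n: "0 < (\<Sum>y\<in>UNIV. w x y * (if y \<in> \<Gamma> then 1 else 0))" using z by simp
  have "w x z \<le> (\<Sum>y\<in>UNIV. w x y)"
    by (rule member_le_sum) (auto simp: nonneg)
  hence "0 < (\<Sum>y\<in>UNIV. w x y)" using z by simp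
  thus ?thesis using x n by simp
qed

lemma key_upper:
  fixes w :: "'a::finite \<Rightarrow> 'a \<Rightarrow> real"
  assumes nonneg: "\<And>x y. w x y \<ge> 0"
    and L: "Lp p w u x = 0" and a0: "0 \<le> alpha_p p" and a1: "alpha_p p \<le> 1"
    and z: "z \<in> \<Gamma>" "w x z > 0"
    and hN: "\<And>y. w x y > 0 \<Longrightarrow> u y \<le> A + E"
    and hG: "\<And>y. y \<in> \<Gamma> \<Longrightarrow> w x y > 0 \<Longrightarrow> u y \<le> A" and E: "E \<ge> 0"
  shows "u x \<le> A + E * (alpha_p p * (1 - (\<Sum>y\<in>UNIV. w x y * (if y\<in>\<Gamma> then 1 else 0)) / (\<Sum>z\<in>UNIV. w x z)) + (1 - alpha_p p)/2)"
proof -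
  define a where "a = alpha_p p"
  define d where "d = (\<Sum>z\<in>UNIV. w x z)"
  define S where "S = (\<Sum>y\<in>UNIV. w x y * u y)"
  define T where "T = (\<Sum>y\<in>UNIV. w x y * (if y\<in>\<Gamma> then 1 else (0::real)))"
  define N where "N = nbrs w x"
  have "w x z \<le> d" unfolding d_def by (rule member_le_sum) (auto simp: nonneg)
  hence dpos: "d > 0" using z by simp
  have sumx: "(\<Sum>y\<in>UNIV. w x y * (u x - u y)) = d * u x - S"
    by (simp add: d_def S_def right_diff_distrib sum_subtractf sum_distrib_right)
  define mid where "mid = (Max (u ` N) + Min (u ` N)) / 2"
  have "a * (1 / d) * (d * u x - S) + (1 - a) * (u x - mid) = 0"
    using L by (simp add: Lp_def deg_def sumx a_def d_def[symmetric] mid_def N_def)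
  hence eq: "u x = a * (S / d) + (1 - a) * mid" using dpos by (simp add: field_simps)
  have "S \<le> (\<Sum>y\<in>UNIV. w x y * (A + E * (1 - (if y\<in>\<Gamma> then 1 else 0))))"
    unfolding S_def
  proof (rule sum_mono)
    fix y :: 'a
    show "w x y * u y \<le> w x y * (A + E * (1 - (if y\<in>\<Gamma> then 1 else 0)))"
    proof (cases "w x y > 0")
      case True
      hence "u y \<le> A + E * (1 - (if y\<in>\<Gamma> then 1 else 0))" using hN hG by auto
      thus ?thesis using True by (simp add: mult_left_mono)
    next
      case False
      hence "w x y = 0" using nonneg[of x y] by simp
      thus ?thesis by simp
    qed
  qed
  also have "(\<Sum>y\<in>UNIV. w x y * (A + E * (1 - (if y\<in>\<Gamma> then 1 else 0))))
      = (\<Sum>y\<in>UNIV. A * w x y + E * w x y - E * (w x y * (if y\<in>\<Gamma> then 1 else 0)))"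
    by (rule sum.cong) (auto simp: algebra_simps)
  also have "\<dots> = A * d + E * d - E * T"
    by (simp add: sum.distrib sum_subtractf sum_distrib_left[symmetric] d_def T_def)
  finally have S_le: "S / d \<le> A + E * (1 - T / d)" using dpos
    by (simp add: field_simps)
  have zN: "z \<in> N" using z by (simp add: N_def nbrs_def)
  have fN: "finite N" by simp
  have mx: "Max (u ` N) \<le> A + E" using zN fN hN by (subst Max_le_iff) (auto simp: N_def nbrs_def)
  have mn: "Min (u ` N) \<le> A"
  proof -
    have "Min (u ` N) \<le> u z" using zN fN by (intro Min_le) auto
    thus ?thesis using hG z by force
  qed
  have "a * (S / d) \<le> a * (A + E * (1 - T / d))" using S_le a0 unfolding a_def by (rule mult_left_mono)
  moreover have "(1 - a) * mid \<le> (1 - a) * (A + E / 2)" using mx mn a1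
    by (intro mult_left_mono) (auto simp: mid_def a_def)
  ultimately have "u x \<le> a * (A + E * (1 - T / d)) + (1 - a) * (A + E / 2)" using eq by linarith
  also have "\<dots> = A + E * (a * (1 - T / d) + (1 - a) / 2)" by (simp add: algebra_simps)
  finally show ?thesis by (simp add: a_def T_def d_def)
qed


lemma key_lower:
  fixes w :: "'a::finite \<Rightarrow> 'a \<Rightarrow> real"
  assumes nonneg: "\<And>x y. w x y \<ge> 0"
    and L: "Lp p w u x = 0" and a0: "0 \<le> alpha_p p" and a1: "alpha_p p \<le> 1"
    and z: "z \<in> \<Gamma>" "w x z > 0"
    and hN: "\<And>y. w x y > 0 \<Longrightarrow> A - E \<le> u y"
    and hG: "\<And>y. y \<in> \<Gamma> \<Longrightarrow> w x y > 0 \<Longrightarrow> A \<le> u y" and E: "E \<ge> 0"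
  shows "A - E * (alpha_p p * (1 - (\<Sum>y\<in>UNIV. w x y * (if y\<in>\<Gamma> then 1 else 0)) / (\<Sum>z\<in>UNIV. w x z)) + (1 - alpha_p p)/2) \<le> u x"
proof -
  define a where "a = alpha_p p"
  define d where "d = (\<Sum>z\<in>UNIV. w x z)"
  define S where "S = (\<Sum>y\<in>UNIV. w x y * u y)"
  define T where "T = (\<Sum>y\<in>UNIV. w x y * (if y\<in>\<Gamma> then 1 else (0::real)))"
  define N where "N = nbrs w x"
  have "w x z \<le> d" unfolding d_def by (rule member_le_sum) (auto simp: nonneg)
  hence dpos: "d > 0" using z by simp
  have sumx: "(\<Sum>y\<in>UNIV. w x y * (u x - u y)) = d * u x - S"
    by (simp add: d_def S_def right_diff_distrib sum_subtractf sum_distrib_right)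
  define mid where "mid = (Max (u ` N) + Min (u ` N)) / 2"
  have "a * (1 / d) * (d * u x - S) + (1 - a) * (u x - mid) = 0"
    using L by (simp add: Lp_def deg_def sumx a_def d_def[symmetric] mid_def N_def)
  hence eq: "u x = a * (S / d) + (1 - a) * mid" using dpos by (simp add: field_simps)
  have "(\<Sum>y\<in>UNIV. w x y * (A - E * (1 - (if y\<in>\<Gamma> then 1 else 0)))) \<le> S"
    unfolding S_def
  proof (rule sum_mono)
    fix y :: 'a
    show "w x y * (A - E * (1 - (if y\<in>\<Gamma> then 1 else 0))) \<le> w x y * u y"
    proof (cases "w x y > 0")
      case True
      hence "A - E * (1 - (if y\<in>\<Gamma> then 1 else 0)) \<le> u y" using hN hG by auto
      thus ?thesis using True by (simp add: mult_left_mono)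
    next
      case False
      hence "w x y = 0" using nonneg[of x y] by simp
      thus ?thesis by simp
    qed
  qed
  moreover have "(\<Sum>y\<in>UNIV. w x y * (A - E * (1 - (if y\<in>\<Gamma> then 1 else 0))))
      = (\<Sum>y\<in>UNIV. A * w x y - E * w x y + E * (w x y * (if y\<in>\<Gamma> then 1 else 0)))"
    by (rule sum.cong) (auto simp: algebra_simps)
  moreover have "\<dots> = A * d - E * d + E * T"
    by (simp add: sum.distrib sum_subtractf sum_distrib_left[symmetric] d_def T_def)
  ultimately have "A * d - E * d + E * T \<le> S" by simp
  hence "(A * d - E * d + E * T) / d \<le> S / d" using dpos by (intro divide_right_mono) auto
  moreover have "(A * d - E * d + E * T) / d = A - E * (1 - T / d)" using dpos by (simp add: field_simps)
  ultimately have S_le: "A - E * (1 - T / d) \<le> S / d" by simp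
  have zN: "z \<in> N" using z by (simp add: N_def nbrs_def)
  have fN: "finite N" by simp
  have mx: "A - E \<le> Min (u ` N)" using zN fN hN by (subst Min_ge_iff) (auto simp: N_def nbrs_def)
  have mn: "A \<le> Max (u ` N)"
  proof -
    have "u z \<le> Max (u ` N)" using zN fN by (intro Max_ge) auto
    thus ?thesis using hG z by force
  qed
  have "a * (A - E * (1 - T / d)) \<le> a * (S / d)" using S_le a0 unfolding a_def by (rule mult_left_mono)
  moreover have "(1 - a) * (A - E / 2) \<le> (1 - a) * mid" using mx mn a1
    by (intro mult_left_mono) (auto simp: mid_def a_def)
  ultimately have "a * (A - E * (1 - T / d)) + (1 - a) * (A - E / 2) \<le> u x" using eq by linarith
  moreover have "a * (A - E * (1 - T / d)) + (1 - a) * (A - E / 2) = A - E * (a * (1 - T / d) + (1 - a) / 2)" by (simp add: algebra_simps)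
  ultimately show ?thesis by (simp add: a_def T_def d_def)
qed



lemma arith_final:
  fixes D G c X :: real
  assumes D: "D > 0" and DG: "D \<le> G" and c: "c > 0"
    and X1: "X \<le> 4 * D / c + D" and X2: "X \<le> 2 * G"
  shows "X \<le> (4 * ln (G / D) / c + 5) * D"
proof -
  define r where "r = G / D"
  have r1: "r \<ge> 1" using D DG by (simp add: r_def)
  have G: "G = r * D" using D by (simp add: r_def)
  define L where "L = ln r"
  have L0: "L \<ge> 0" using r1 by (simp add: L_def)
  have "X \<le> (4 * L / c + 5) * D"
  proof (cases "1 \<le> L + c")
    case True
    have "4 \<le> (4 * L + 4 * c)" using True by linarith
    hence "4 / c \<le> (4 * L + 4 * c) / c" using c by (intro divide_right_mono) auto
    also have "(4 * L + 4 * c) / c = 4 * L / c + 4" using c by (simp add: add_divide_distrib)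
    finally have "4 / c * D \<le> (4 * L / c + 4) * D" using D by (intro mult_right_mono) auto
    hence "4 * D / c + D \<le> (4 * L / c + 5) * D" by (simp add: algebra_simps)
    thus ?thesis using X1 by linarith
  next
    case False
    hence Lc: "L + c < 1" by simp
    have er: "exp L = r" using r1 by (simp add: L_def)
    have "1 + (- L) \<le> exp (- L)" by (rule exp_ge_add_one_self)
    also have "exp (- L) = 1 / r" using er by (simp add: exp_minus inverse_eq_divide)
    finally have "1 - L \<le> 1 / r" by simp
    hence "r * (1 - L) \<le> r * (1 / r)" using r1 by (intro mult_left_mono) auto
    also have "r * (1 / r) = 1" using r1 by simp
    finally have h: "r * (1 - L) \<le> 1" .
    have pos: "1 - L > 0" using Lc c by linarith
    have "r \<le> 1 / (1 - L)" using h pos by (simp add: pos_le_divide_eq)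
    also have "1 / (1 - L) = 1 + L / (1 - L)" using pos by (simp add: field_simps)
    finally have rle: "r \<le> 1 + L / (1 - L)" .
    have "L / (1 - L) \<le> L / c" using L0 c Lc by (intro divide_left_mono) auto
    moreover have "L / c \<ge> 0" using L0 c by simp
    moreover have "4 * L / c = 4 * (L / c)" by simp
    ultimately have "2 * r \<le> 4 * L / c + 5" using rle by linarith
    hence "2 * r * D \<le> (4 * L / c + 5) * D" using D by (intro mult_right_mono) auto
    thus ?thesis using X2 G by simp
  qed
  thus ?thesis by (simp add: L_def r_def)
qed

theorem mainTheorem5:
  fixes w :: "'a::finite \<Rightarrow> 'a \<Rightarrow> real" and p :: real and \<Gamma> :: "'a set"
    and g u :: "'a \<Rightarrow> real"
  assumes p: "p \<ge> 2"
    and nonneg: "\<And>x y. w x y \<ge> 0"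
    and sym: "\<And>x y. w x y = w y x"
    and conn: "graph_connected w"
    and A1: "assumption_A1 w \<Gamma>"
    and g_pos: "0 < grad_norm w g"
    and g_le: "grad_norm w g \<le> sup_norm g"
    and sol: "solves_P p w \<Gamma> g u"
  shows "\<forall>x y. w x y > 0 \<longrightarrow>
           \<bar>u x - u y\<bar> \<le> (4 * ln (sup_norm g / grad_norm w g)
                 / (1 - alpha_p p + 2 * alpha_p p * delta w \<Gamma>) + 5) * grad_norm w g"
proof -
  define G where "G = sup_norm g"
  define D where "D = grad_norm w g"
  define dl where "dl = delta w \<Gamma>"
  define c where "c = 1 - alpha_p p + 2 * alpha_p p * dl"
  have a0: "0 < alpha_p p" using p by (simp add: alpha_p_def)
  have a1: "alpha_p p \<le> 1" using p by (simp add: alpha_p_def)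
  have a0': "0 \<le> alpha_p p" using a0 by simp
  have dl0: "0 < dl" using delta_pos[OF nonneg A1] by (simp add: dl_def)
  have "0 < alpha_p p * dl" using a0 dl0 by simp
  hence c0: "c > 0" using a1 by (simp add: c_def)
  have coef: "E * (alpha_p p * (1 - (\<Sum>y\<in>UNIV. w x y * (if y\<in>\<Gamma> then 1 else 0)) / (\<Sum>z\<in>UNIV. w x z)) + (1 - alpha_p p)/2) \<le> E * (1 - c / 2)"
    if E: "E \<ge> 0" for E x
  proof -
    have "dl \<le> (\<Sum>y\<in>UNIV. w x y * (if y\<in>\<Gamma> then 1 else 0)) / (\<Sum>z\<in>UNIV. w x z)"
      unfolding dl_def by (rule delta_le)
    hence "alpha_p p * dl \<le> alpha_p p * ((\<Sum>y\<in>UNIV. w x y * (if y\<in>\<Gamma> then 1 else 0)) / (\<Sum>z\<in>UNIV. w x z))"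
      using a0' by (rule mult_left_mono)
    moreover have gen: "\<And>q. alpha_p p * (1 - q) + (1 - alpha_p p)/2 = 1 - c / 2 + (alpha_p p * dl - alpha_p p * q)"
      by (simp add: c_def field_simps)
    note gen[of "(\<Sum>y\<in>UNIV. w x y * (if y\<in>\<Gamma> then 1 else 0)) / (\<Sum>z\<in>UNIV. w x z)"]
    ultimately have "alpha_p p * (1 - (\<Sum>y\<in>UNIV. w x y * (if y\<in>\<Gamma> then 1 else 0)) / (\<Sum>z\<in>UNIV. w x z)) + (1 - alpha_p p)/2 \<le> 1 - c / 2"
      by linarith
    thus ?thesis using E by (rule mult_left_mono)
  qed
  have nb: "\<exists>z. z \<in> \<Gamma> \<and> w x z > 0" for x
    using A1 unfolding assumption_A1_def nbrs_def by blast
  have Lx: "Lp p w u x = 0" if "x \<notin> \<Gamma>" for x using sol that by (simp add: solves_P_def)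
  have ug: "u x = g x" if "x \<in> \<Gamma>" for x using sol that by (simp add: solves_P_def)
  have gG: "\<bar>g x\<bar> \<le> G" for x unfolding G_def by (rule sup_norm_ge)
  have gD: "\<bar>g x - g y\<bar> \<le> D" if "w x y > 0" for x y unfolding D_def using that by (rule grad_ge)
  have cE: "E * (1 - c / 2) = E - E * c / 2" for E by (simp add: algebra_simps)

  have uup: "u x \<le> G" for x
  proof -
    have "Max (range u) \<in> range u" by (rule Max_in) auto
    then obtain x0 where x0: "u x0 = Max (range u)" by (metis rangeE)
    have Mge: "u y \<le> u x0" for y using x0 by (simp add: Max_ge)
    show ?thesis
    proof (rule ccontr)
      assume "\<not> u x \<le> G"
      hence gt: "u x0 > G" using Mge[of x] by simp
      have x0n: "x0 \<notin> \<Gamma>" using gt ug gG[of x0] by force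
      obtain z where z: "z \<in> \<Gamma>" "w x0 z > 0" using nb by blast
      have "u x0 \<le> G + (u x0 - G) * (alpha_p p * (1 - (\<Sum>y\<in>UNIV. w x0 y * (if y\<in>\<Gamma> then 1 else 0)) / (\<Sum>z\<in>UNIV. w x0 z)) + (1 - alpha_p p)/2)"
        by (rule key_upper[OF nonneg Lx[OF x0n] a0' a1 z]) (use Mge ug gG gt in \<open>auto simp: abs_le_iff\<close>)
      also have "\<dots> \<le> G + (u x0 - G) * (1 - c / 2)" using coef[of "u x0 - G" x0] gt by simp
      finally have "(u x0 - G) * c \<le> 0" unfolding cE by simp
      moreover have "0 < (u x0 - G) * c" using gt c0 by simp
      ultimately show False by simp
    qed
  qed
  have ulow: "- G \<le> u x" for x
  proof -
    have "Min (range u) \<in> range u" by (rule Min_in) auto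
    then obtain x0 where x0: "u x0 = Min (range u)" by (metis rangeE)
    have Mle: "u x0 \<le> u y" for y using x0 by (simp add: Min_le)
    show ?thesis
    proof (rule ccontr)
      assume "\<not> - G \<le> u x"
      hence gt: "u x0 < - G" using Mle[of x] by simp
      have x0n: "x0 \<notin> \<Gamma>" using gt ug gG[of x0] by force
      obtain z where z: "z \<in> \<Gamma>" "w x0 z > 0" using nb by blast
      have hGl: "- G \<le> g y" for y using gG[of y] by (simp add: abs_le_iff)
      have "- G - (- G - u x0) * (alpha_p p * (1 - (\<Sum>y\<in>UNIV. w x0 y * (if y\<in>\<Gamma> then 1 else 0)) / (\<Sum>z\<in>UNIV. w x0 z)) + (1 - alpha_p p)/2) \<le> u x0"
        using Mle gt by (intro key_lower[OF nonneg Lx[OF x0n] a0' a1 z]) (auto simp: ug abs_le_iff hGl)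
      moreover have "(- G - u x0) * (alpha_p p * (1 - (\<Sum>y\<in>UNIV. w x0 y * (if y\<in>\<Gamma> then 1 else 0)) / (\<Sum>z\<in>UNIV. w x0 z)) + (1 - alpha_p p)/2) \<le> (- G - u x0) * (1 - c / 2)"
        using coef[of "- G - u x0" x0] gt by simp
      ultimately have "(- G - u x0) * c \<le> 0" unfolding cE by simp
      moreover have "0 < (- G - u x0) * c" using gt c0 by simp
      ultimately show False by simp
    qed
  qed
  have eup: "u x - g x \<le> 2 * D / c" for x
  proof -
    have "Max (range (\<lambda>x. u x - g x)) \<in> range (\<lambda>x. u x - g x)" by (rule Max_in) auto
    then obtain x0 where x0: "Max (range (\<lambda>x. u x - g x)) = u x0 - g x0" by blast
    have Mge: "u y - g y \<le> u x0 - g x0" for y unfolding x0[symmetric] by (rule Max_ge) auto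
    have "u x0 - g x0 \<le> 2 * D / c"
    proof (cases "u x0 - g x0 \<le> 0")
      case True
      have "0 \<le> 2 * D / c" using g_pos c0 by (simp add: D_def)
      thus ?thesis using True by simp
    next
      case False
      hence gt: "u x0 - g x0 > 0" by simp
      have x0n: "x0 \<notin> \<Gamma>" using gt ug by force
      obtain z where z: "z \<in> \<Gamma>" "w x0 z > 0" using nb by blast
      have hN: "u y \<le> (g x0 + D) + (u x0 - g x0)" if "w x0 y > 0" for y
        using Mge[of y] gD[OF that] by (simp add: abs_le_iff)
      have hG: "u y \<le> g x0 + D" if "y \<in> \<Gamma>" "w x0 y > 0" for y
        using ug[OF that(1)] gD[OF that(2)] by (simp add: abs_le_iff)
      have "u x0 \<le> (g x0 + D) + (u x0 - g x0) * (alpha_p p * (1 - (\<Sum>y\<in>UNIV. w x0 y * (if y\<in>\<Gamma> then 1 else 0)) / (\<Sum>z\<in>UNIV. w x0 z)) + (1 - alpha_p p)/2)"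
        by (rule key_upper[OF nonneg Lx[OF x0n] a0' a1 z hN hG]) (use gt in auto)
      also have "\<dots> \<le> (g x0 + D) + (u x0 - g x0) * (1 - c / 2)" using coef[of "u x0 - g x0" x0] gt by simp
      finally have "(u x0 - g x0) * c \<le> 2 * D" unfolding cE by simp
      thus ?thesis using c0 by (simp add: pos_le_divide_eq)
    qed
    thus ?thesis using Mge[of x] by simp
  qed
  have elow: "g x - u x \<le> 2 * D / c" for x
  proof -
    have "Min (range (\<lambda>x. u x - g x)) \<in> range (\<lambda>x. u x - g x)" by (rule Min_in) auto
    then obtain x0 where x0: "Min (range (\<lambda>x. u x - g x)) = u x0 - g x0" by blast
    have Mle: "u x0 - g x0 \<le> u y - g y" for y unfolding x0[symmetric] by (rule Min_le) auto
    have "g x0 - u x0 \<le> 2 * D / c"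
    proof (cases "g x0 - u x0 \<le> 0")
      case True
      have "0 \<le> 2 * D / c" using g_pos c0 by (simp add: D_def)
      thus ?thesis using True by simp
    next
      case False
      hence gt: "g x0 - u x0 > 0" by simp
      have x0n: "x0 \<notin> \<Gamma>" using gt ug by force
      obtain z where z: "z \<in> \<Gamma>" "w x0 z > 0" using nb by blast
      have hN: "(g x0 - D) - (g x0 - u x0) \<le> u y" if "w x0 y > 0" for y
        using Mle[of y] gD[OF that] by (simp add: abs_le_iff)
      have hG: "g x0 - D \<le> u y" if "y \<in> \<Gamma>" "w x0 y > 0" for y
        using ug[OF that(1)] gD[OF that(2)] by (simp add: abs_le_iff)
      have "(g x0 - D) - (g x0 - u x0) * (alpha_p p * (1 - (\<Sum>y\<in>UNIV. w x0 y * (if y\<in>\<Gamma> then 1 else 0)) / (\<Sum>z\<in>UNIV. w x0 z)) + (1 - alpha_p p)/2) \<le> u x0"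
        by (rule key_lower[OF nonneg Lx[OF x0n] a0' a1 z hN hG]) (use gt in auto)
      moreover have "(g x0 - u x0) * (alpha_p p * (1 - (\<Sum>y\<in>UNIV. w x0 y * (if y\<in>\<Gamma> then 1 else 0)) / (\<Sum>z\<in>UNIV. w x0 z)) + (1 - alpha_p p)/2) \<le> (g x0 - u x0) * (1 - c / 2)"
        using coef[of "g x0 - u x0" x0] gt by simp
      ultimately have "(g x0 - u x0) * c \<le> 2 * D" unfolding cE by simp
      thus ?thesis using c0 by (simp add: pos_le_divide_eq)
    qed
    thus ?thesis using Mle[of x] by simp
  qed
  show ?thesis
  proof (intro allI impI)
    fix x y assume xy: "w x y > 0"
    have X1: "\<bar>u x - u y\<bar> \<le> 4 * D / c + D"
      using eup[of x] eup[of y] elow[of x] elow[of y] gD[OF xy] by (simp add: abs_le_iff)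
    have X2: "\<bar>u x - u y\<bar> \<le> 2 * G"
      using uup[of x] uup[of y] ulow[of x] ulow[of y] by (simp add: abs_le_iff)
    have "\<bar>u x - u y\<bar> \<le> (4 * ln (G / D) / c + 5) * D"
      by (rule arith_final[OF _ _ c0 X1 X2]) (use g_pos g_le in \<open>auto simp: D_def G_def\<close>)
    thus "\<bar>u x - u y\<bar> \<le> (4 * ln (sup_norm g / grad_norm w g)
                 / (1 - alpha_p p + 2 * alpha_p p * delta w \<Gamma>) + 5) * grad_norm w g"
      by (simp add: G_def D_def c_def dl_def)
  qed
qed

end
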